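(* Let $S=\{p_1,\dots,p_n\}$ be a set of point sites in $\mathbb{R}^d$ with an admissible system of distance functions $\{d_{p_i}\}$, and let $C\subset\mathbb{R}^d$ be a bounded, open, path-connected set. Let $T\subset S$ with $T\neq\emptyset$ and $T\neq S$. Let $w=(w_1,\dots,w_n)$ be a weight vector such that $\mu(C\cap\mathrm{VR}_w(p,S))>0$ for every $p\in S$. Let $\delta>0$ and define $w'$ by $w'_i=w_i+\delta$ if $p_i\in T$ and $w'_i=w_i$ otherwise. Then there exists $t\in T$ with $\mu(C\cap\mathrm{VR}_{w'}(t,S))>\mu(C\cap\mathrm{VR}_w(t,S))$.
   Context: $\mu$ is a measure defined on all Lebesgue-measurable subsets of $\mathbb{R}^d$ such that $\mu$ and $d$-dimensional Lebesgue measure are mutually absolutely continuous. Each site $p\in S$ has a continuous function $d_p:\mathbb{R}^d\to\mathbb{R}_{\ge 0}$. For $p\neq q\in S$ and $\gamma\in\mathbb{R}$ let $R_\gamma(p,q)=\{z\in\mathbb{R}^d : d_p(z)-d_q(z)<\gamma\}$. The system $\{d_p\}_{p\in S}$ is called admissible if for all $p\neq q\in S$ and every bounded open set $C\subset\mathbb{R}^d$ there exist real numbers $m_{pq}<M_{pq}$ such that the function $\gamma\mapsto\mu(C\cap R_\gamma(p,q))$ is continuous on $\mathbb{R}$ and increases (monotonically) from $0$ to $\mu(C)$ as $\gamma$ grows from $m_{pq}$ to $M_{pq}$; moreover $C\cap R_\gamma(p,q)=\emptyset$ for $\gamma\le m_{pq}$ and $C\subset R_\gamma(p,q)$ for $\gamma\ge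 M_{pq}$. For a weight vector $w$, the additively weighted Voronoi region is $\mathrm{VR}_w(p_i,S)=\bigcap_{j\neq i}R_{w_i-w_j}(p_i,p_j)$, i.e. the set of $z$ with $d_{p_i}(z)-w_i<d_{p_j}(z)-w_j$ for all $j\neq i$. *)

theory Defs
  imports "HOL-Analysis.Analysis"
begin

text \<open>Sites are points of the Euclidean space 'a; d p is the distance function of site p.\<close>

definition Rgam :: "('a \<Rightarrow> 'a \<Rightarrow> real) \<Rightarrow> 'a \<Rightarrow> 'a \<Rightarrow> real \<Rightarrow> 'a set" where
  "Rgam d p q \<gamma> = {z. d p z - d q z < \<gamma>}"

definition VR :: "('a \<Rightarrow> 'a \<Rightarrow> real) \<Rightarrow> ('a \<Rightarrow> real) \<Rightarrow> 'a set \<Rightarrow> 'a \<Rightarrow> 'a set" where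
  "VR d w S p = (\<Inter>q\<in>S - {p}. Rgam d p q (w p - w q))"

definition admissible ::
  "('a::euclidean_space) measure \<Rightarrow> ('a \<Rightarrow> 'a \<Rightarrow> real) \<Rightarrow> 'a set \<Rightarrow> bool" where
  "admissible \<mu> d S \<longleftrightarrow>
     (\<forall>p\<in>S. \<forall>q\<in>S. p \<noteq> q \<longrightarrow> (\<forall>C. bounded C \<and> open C \<longrightarrow>
        (\<exists>m M. m < M
           \<and> emeasure \<mu> C < \<infinity>
           \<and> continuous_on UNIV (\<lambda>\<gamma>. measure \<mu> (C \<inter> Rgam d p q \<gamma>))
           \<and> mono_on {m..M} (\<lambda>\<gamma>. measure \<mu> (C \<inter> Rgam d p q \<gamma>))
           \<and> (\<forall>\<gamma>\<le>m. C \<inter> Rgam d p q \<gamma> = {})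
           \<and> (\<forall>\<gamma>\<ge>M. C \<subseteq> Rgam d p q \<gamma>))))"

end

theory Submission
  imports Defs
begin

lemma open_leb: "open A \<Longrightarrow> A \<in> sets lebesgue"
  by (metis borel_open sets_completionI_sets sets_lborel)

lemma closed_leb: "closed A \<Longrightarrow> A \<in> sets lebesgue"
  by (metis borel_closed sets_completionI_sets sets_lborel)

lemma argmin_ex:
  fixes f :: "'b \<Rightarrow> real"
  assumes "finite A" "A \<noteq> {}"
  shows "\<exists>a\<in>A. \<forall>b\<in>A. f a \<le> f b"
proof -
  have "Min (f ` A) \<in> f ` A" using assms by simp
  then obtain a where a: "a \<in> A" "f a = Min (f ` A)" by auto
  show ?thesis using a assms by (intro bexI[of _ a]) auto
qed

lemma adm_fin:
  assumes "admissible \<mu> d S" "p \<in> S" "q \<in> S" "p \<noteq> q" "bounded C" "open C"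
  shows "emeasure \<mu> C < \<infinity>"
  using assms unfolding admissible_def by blast

lemma tie_null:
  fixes \<mu> :: "('a::euclidean_space) measure"
  assumes mu_sets: "sets \<mu> = sets lebesgue"
    and adm: "admissible \<mu> d S" and pS: "p \<in> S" and qS: "q \<in> S" and pq: "p \<noteq> q"
    and C_bdd: "bounded C" and C_open: "open C"
    and cp: "continuous_on UNIV (d p)" and cq: "continuous_on UNIV (d q)"
  shows "C \<inter> {z. d p z - d q z = \<gamma>} \<in> null_sets \<mu>"
proof -
  define F where "F = (\<lambda>\<gamma>. measure \<mu> (C \<inter> Rgam d p q \<gamma>))"
  from adm pS qS pq C_bdd C_open obtain m M where
    fin: "emeasure \<mu> C < \<infinity>" and cont: "continuous_on UNIV F"
    unfolding admissible_def F_def by blast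
  define E where "E = C \<inter> {z. d p z - d q z = \<gamma>}"
  have cd: "continuous_on UNIV (\<lambda>z. d p z - d q z)" using cp cq by (intro continuous_intros)
  have RS: "C \<inter> Rgam d p q g \<in> sets \<mu>" for g
    unfolding mu_sets Rgam_def
    by (intro open_leb open_Int C_open open_Collect_less cd continuous_intros)
  have ES: "E \<in> sets \<mu>" unfolding mu_sets E_def
    by (intro sets.Int open_leb closed_leb C_open closed_Collect_eq cd continuous_intros)
  have CS: "C \<in> sets \<mu>" unfolding mu_sets using C_open open_leb by blast
  have finR: "emeasure \<mu> (C \<inter> Rgam d p q g) \<noteq> \<infinity>" for g
    using fin emeasure_mono[OF _ CS, of "C \<inter> Rgam d p q g"] by (auto simp: top_unique)
  have bound: "measure \<mu> E \<le> F (\<gamma> + e) - F \<gamma>" if "e > 0" for e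
  proof -
    have "E \<subseteq> C \<inter> Rgam d p q (\<gamma>+e) - C \<inter> Rgam d p q \<gamma>"
      using that unfolding E_def Rgam_def by auto
    moreover have "C \<inter> Rgam d p q (\<gamma>+e) - C \<inter> Rgam d p q \<gamma> \<in> fmeasurable \<mu>"
      using finR RS by (auto simp: fmeasurable_def less_top intro!: sets.Diff
          order.strict_trans1[OF emeasure_mono[OF Diff_subset]])
    ultimately have "measure \<mu> E \<le> measure \<mu> (C \<inter> Rgam d p q (\<gamma>+e) - C \<inter> Rgam d p q \<gamma>)"
      using ES by (metis measure_mono_fmeasurable)
    also have "\<dots> = F (\<gamma> + e) - F \<gamma>" unfolding F_def
      using that by (intro measure_Diff finR RS) (auto simp: Rgam_def)
    finally show ?thesis .
  qed
  have lim: "(\<lambda>n. F (\<gamma> + 1 / Suc n) - F \<gamma>) \<longlonglongrightarrow> F \<gamma> - F \<gamma>"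
  proof (intro tendsto_intros)
    have "(\<lambda>n. \<gamma> + 1 / real (Suc n)) \<longlonglongrightarrow> \<gamma> + 0"
      by (intro tendsto_intros LIMSEQ_Suc[OF lim_1_over_n])
    then show "(\<lambda>n. F (\<gamma> + 1 / real (Suc n))) \<longlonglongrightarrow> F \<gamma>"
      using cont by (auto intro: isCont_tendsto_compose simp: continuous_on_eq_continuous_at)
  qed
  have "measure \<mu> E \<le> F \<gamma> - F \<gamma>"
    by (rule LIMSEQ_le_const[OF lim]) (auto intro!: bound)
  hence m0: "measure \<mu> E = 0" by (simp add: measure_nonneg antisym)
  have "emeasure \<mu> E \<noteq> \<infinity>"
    using fin emeasure_mono[OF _ CS, of E] by (auto simp: E_def top_unique)
  hence "emeasure \<mu> E = 0" using m0 by (simp add: emeasure_eq_ennreal_measure)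
  thus ?thesis using ES E_def by (auto intro: null_setsI)
qed

theorem lemma2:
  fixes \<mu> :: "('a::euclidean_space) measure"
    and d :: "'a \<Rightarrow> 'a \<Rightarrow> real"
    and S T C :: "'a set"
    and w :: "'a \<Rightarrow> real"
    and \<delta> :: real
  assumes mu_sets: "sets \<mu> = sets lebesgue"
    and mu_ac: "\<And>A. A \<in> sets lebesgue \<Longrightarrow> (emeasure \<mu> A = 0 \<longleftrightarrow> emeasure lebesgue A = 0)"
    and S_fin: "finite S"
    and d_cont: "\<And>p. p \<in> S \<Longrightarrow> continuous_on UNIV (d p)"
    and d_nonneg: "\<And>p z. p \<in> S \<Longrightarrow> d p z \<ge> 0"
    and adm: "admissible \<mu> d S"
    and C_bdd: "bounded C" and C_open: "open C" and C_pc: "path_connected C"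
    and T_sub: "T \<subseteq> S" and T_ne: "T \<noteq> {}" and T_neq: "T \<noteq> S"
    and w_pos: "\<And>p. p \<in> S \<Longrightarrow> emeasure \<mu> (C \<inter> VR d w S p) > 0"
    and delta_pos: "\<delta> > 0"
  shows "\<exists>t\<in>T. emeasure \<mu> (C \<inter> VR d (\<lambda>p. if p \<in> T then w p + \<delta> else w p) S t)
                 > emeasure \<mu> (C \<inter> VR d w S t)"
proof (rule ccontr)
  assume neg: "\<not> ?thesis"
  define w' where "w' = (\<lambda>p. if p \<in> T then w p + \<delta> else w p)"
  have T_fin: "finite T" using S_fin T_sub finite_subset by blast
  have U_fin: "finite (S - T)" using S_fin by simp
  have U_ne: "S - T \<noteq> {}" using T_sub T_neq by blast
  have VR_open: "open (VR d v S p)" if "p \<in> S" for v p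
    unfolding VR_def Rgam_def
    by (intro open_INT ballI open_Collect_less continuous_intros d_cont) (use S_fin that in auto)
  have VR_sets: "C \<inter> VR d v S p \<in> sets \<mu>" if "p \<in> S" for v p
    unfolding mu_sets using VR_open[OF that] C_open by (intro open_leb open_Int)
  have nonempty: "C \<inter> VR d w S p \<noteq> {}" if "p \<in> S" for p
    using w_pos[OF that] by auto
  define Q' where "Q' = (\<Union>t\<in>T. \<Inter>q\<in>S-T. {z. d t z - w t - \<delta> < d q z - w q})"
  define Q where "Q = (\<Union>q\<in>S-T. \<Inter>t\<in>T. {z. d q z - w q < d t z - w t})"
  have oQ': "open Q'" unfolding Q'_def
    by (intro open_UN open_INT ballI open_Collect_less continuous_intros d_cont U_fin)
       (use T_sub in auto)
  have oQ: "open Q" unfolding Q_def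
    by (intro open_UN open_INT ballI open_Collect_less continuous_intros d_cont T_fin)
       (use T_sub in auto)
  have cover: "C \<subseteq> Q' \<union> Q"
  proof
    fix z assume "z \<in> C"
    show "z \<in> Q' \<union> Q"
    proof (cases "z \<in> Q'")
      case False
      obtain t0 where t0: "t0 \<in> T" "\<forall>t\<in>T. d t0 z - w t0 \<le> d t z - w t"
        using argmin_ex[OF T_fin T_ne, of "\<lambda>t. d t z - w t"] by blast
      from False t0(1) obtain q where q: "q \<in> S - T" "\<not> d t0 z - w t0 - \<delta> < d q z - w q"
        unfolding Q'_def by blast
      have "\<forall>t\<in>T. d q z - w q < d t z - w t"
      proof
        fix t assume "t \<in> T"
        hence "d t0 z - w t0 \<le> d t z - w t" using t0(2) by blast
        thus "d q z - w q < d t z - w t" using q(2) delta_pos by linarith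
      qed
      then show ?thesis using q unfolding Q_def by blast
    qed auto
  qed
  obtain t1 where t1: "t1 \<in> T" using T_ne by blast
  obtain z1 where z1: "z1 \<in> C \<inter> VR d w S t1" using nonempty t1 T_sub by blast
  have "z1 \<in> Q'" unfolding Q'_def
  proof (intro UN_I[OF t1] InterI)
    show "z1 \<in> X" if "X \<in> (\<lambda>q. {z. d t1 z - w t1 - \<delta> < d q z - w q}) ` (S - T)" for X
    proof -
      from that obtain q where q: "q \<in> S - T" "X = {z. d t1 z - w t1 - \<delta> < d q z - w q}" by blast
      have "q \<in> S - {t1}" using q t1 by blast
      hence "d t1 z1 - d q z1 < w t1 - w q" using z1 unfolding VR_def Rgam_def by blast
      thus ?thesis using q delta_pos by simp
    qed
  qed
  hence Q'C: "Q' \<inter> C \<noteq> {}" using z1 by blast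
  obtain q1 where q1: "q1 \<in> S - T" using U_ne by blast
  obtain z2 where z2: "z2 \<in> C \<inter> VR d w S q1" using nonempty q1 by blast
  have "z2 \<in> Q" unfolding Q_def
  proof (intro UN_I[OF q1] InterI)
    show "z2 \<in> X" if "X \<in> (\<lambda>t. {z. d q1 z - w q1 < d t z - w t}) ` T" for X
    proof -
      from that obtain t where t: "t \<in> T" "X = {z. d q1 z - w q1 < d t z - w t}" by blast
      have "t \<in> S - {q1}" using t T_sub q1 by blast
      hence "d q1 z2 - d t z2 < w q1 - w t" using z2 unfolding VR_def Rgam_def by blast
      thus ?thesis using t by simp
    qed
  qed
  hence QC: "Q \<inter> C \<noteq> {}" using z2 by blast
  have conn: "connected C" using C_pc path_connected_imp_connected by blast
  define Ob where "Ob = Q' \<inter> Q \<inter> C"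
  have O_ne: "Ob \<noteq> {}" unfolding Ob_def using connectedD[OF conn oQ' oQ _ cover] Q'C QC by blast
  have O_open: "open Ob" unfolding Ob_def using oQ' oQ C_open by blast
  have O_leb: "Ob \<in> sets lebesgue" using O_open open_leb by blast
  have "emeasure lebesgue Ob \<noteq> 0"
    using open_not_negligible[OF O_open O_ne] negligible_iff_emeasure0[OF O_leb] by blast
  hence O_pos: "emeasure \<mu> Ob \<noteq> 0" using mu_ac[OF O_leb] by blast
  define N where "N = (\<Union>t\<in>T. \<Union>t'\<in>T - {t}. C \<inter> {z. d t z - d t' z = w t - w t'})"
  have N_null: "N \<in> null_sets \<mu>" unfolding N_def
  proof (intro null_sets_UN' countable_finite T_fin finite_Diff)
    fix t t' assume t: "t \<in> T" and t': "t' \<in> T - {t}"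
    have tS: "t \<in> S" and t'S: "t' \<in> S" and ne: "t \<noteq> t'" using t t' T_sub by auto
    show "C \<inter> {z. d t z - d t' z = w t - w t'} \<in> null_sets \<mu>"
      by (rule tie_null[OF mu_sets adm tS t'S ne C_bdd C_open d_cont[OF tS] d_cont[OF t'S]])
  qed
  define D where "D t = C \<inter> VR d w' S t - C \<inter> VR d w S t" for t
  have sub: "VR d w S t \<subseteq> VR d w' S t" if tT: "t \<in> T" for t
  proof
    fix z assume z: "z \<in> VR d w S t"
    have "d t z - d q z < w' t - w' q" if "q \<in> S - {t}" for q
    proof -
      have "d t z - d q z < w t - w q" using z that unfolding VR_def Rgam_def by blast
      moreover have "w' t - w' q \<ge> w t - w q" using tT delta_pos unfolding w'_def by simp
      ultimately show ?thesis by linarith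
    qed
    thus "z \<in> VR d w' S t" unfolding VR_def Rgam_def by blast
  qed
  have D_null: "D t \<in> null_sets \<mu>" if t: "t \<in> T" for t
  proof -
    have tS: "t \<in> S" using t T_sub by blast
    have "\<not> emeasure \<mu> (C \<inter> VR d w' S t) > emeasure \<mu> (C \<inter> VR d w S t)"
    proof
      assume "emeasure \<mu> (C \<inter> VR d w' S t) > emeasure \<mu> (C \<inter> VR d w S t)"
      hence "\<exists>t\<in>T. emeasure \<mu> (C \<inter> VR d w' S t) > emeasure \<mu> (C \<inter> VR d w S t)"
        using t by (rule rev_bexI[rotated])
      thus False using neg unfolding w'_def by (rule notE[rotated])
    qed
    hence le: "emeasure \<mu> (C \<inter> VR d w' S t) \<le> emeasure \<mu> (C \<inter> VR d w S t)"
      by (simp add: not_less)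
    obtain u where u: "u \<in> S - T" using U_ne by blast
    have ut: "t \<noteq> u" using u t by blast
    have Cfin: "emeasure \<mu> C < \<infinity>"
      using adm_fin[OF adm tS _ ut C_bdd C_open] u by blast
    have CS: "C \<in> sets \<mu>" unfolding mu_sets using C_open open_leb by blast
    have "emeasure \<mu> (C \<inter> VR d w S t) \<le> emeasure \<mu> C"
      by (rule emeasure_mono[OF _ CS]) blast
    hence fin: "emeasure \<mu> (C \<inter> VR d w S t) \<noteq> \<infinity>" using Cfin by auto
    have s1: "C \<inter> VR d w S t \<subseteq> C \<inter> VR d w' S t" using sub[OF t] by blast
    have "emeasure \<mu> (D t) = emeasure \<mu> (C \<inter> VR d w' S t) - emeasure \<mu> (C \<inter> VR d w S t)"
      unfolding D_def by (rule emeasure_Diff[OF fin VR_sets[OF tS] VR_sets[OF tS] s1])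
    also have "\<dots> = 0"
    proof -
      have "emeasure \<mu> (C \<inter> VR d w' S t) \<noteq> \<infinity>" using fin le by (auto simp: top_unique)
      thus ?thesis unfolding diff_eq_0_iff_ennreal using le by (simp add: less_top)
    qed
    finally have "emeasure \<mu> (D t) = 0" .
    moreover have "D t \<in> sets \<mu>" unfolding D_def using VR_sets[OF tS] by blast
    ultimately show ?thesis by (rule null_setsI)
  qed
  have key: "Ob - N \<subseteq> (\<Union>t\<in>T. D t)"
  proof
    fix z assume zO: "z \<in> Ob - N"
    hence zC: "z \<in> C" and zQ: "z \<in> Q" and zQ': "z \<in> Q'" and zN: "z \<notin> N"
      unfolding Ob_def by auto
    obtain t0 where t0: "t0 \<in> T" "\<forall>t\<in>T. d t0 z - w t0 \<le> d t z - w t"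
      using argmin_ex[OF T_fin T_ne, of "\<lambda>t. d t z - w t"] by blast
    have "z \<in> VR d w' S t0" unfolding VR_def Rgam_def
    proof (intro InterI, clarsimp)
      fix q assume qS: "q \<in> S" and qt: "q \<noteq> t0"
      show "d t0 z - d q z < w' t0 - w' q"
      proof (cases "q \<in> T")
        case True
        have "d t0 z - d q z \<noteq> w t0 - w q" using zN zC True qt t0(1) unfolding N_def by blast
        moreover have "d t0 z - w t0 \<le> d q z - w q" using t0(2) True by blast
        ultimately have "d t0 z - d q z < w t0 - w q" by linarith
        then show ?thesis using t0(1) True unfolding w'_def by simp
      next
        case False
        from zQ' obtain t where t: "t \<in> T" "d t z - w t - \<delta> < d q z - w q"
          unfolding Q'_def using qS False by blast
        moreover have "d t0 z - w t0 \<le> d t z - w t" using t0(2) t(1) by blast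
        ultimately have "d t0 z - d q z < w t0 + \<delta> - w q" by linarith
        then show ?thesis using t0(1) False unfolding w'_def by simp
      qed
    qed
    moreover have "z \<notin> VR d w S t0"
    proof
      assume "z \<in> VR d w S t0"
      from zQ obtain q where q: "q \<in> S - T" "\<forall>t\<in>T. d q z - w q < d t z - w t"
        unfolding Q_def by blast
      have "q \<noteq> t0" using q t0 by blast
      with q \<open>z \<in> VR d w S t0\<close> have "d t0 z - d q z < w t0 - w q" unfolding VR_def Rgam_def by blast
      moreover have "d q z - w q < d t0 z - w t0" using q(2) t0(1) by blast
      ultimately show False by linarith
    qed
    ultimately have "z \<in> D t0" using zC unfolding D_def by blast
    thus "z \<in> (\<Union>t\<in>T. D t)" using t0(1) by blast
  qed
  have "(\<Union>t\<in>T. D t) \<union> N \<in> null_sets \<mu>"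
    using D_null N_null T_fin by (intro null_sets.Un null_sets_UN' countable_finite) auto
  moreover have "Ob \<subseteq> (\<Union>t\<in>T. D t) \<union> N" using key by blast
  moreover have "Ob \<in> sets \<mu>" using O_leb mu_sets by simp
  ultimately have "Ob \<in> null_sets \<mu>" by (metis null_sets_subset)
  with O_pos show False by auto
qed

end
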